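(* Let $r \in \mathbb{N}$ with $r\ge 2$. (1) $k_{\mathsf{D}}(C_2^r) = \min \{k \in \mathbb{N} \colon \mathsf{D}_0(C_2^r) = \mathsf{D}_k(C_2^r) - 2k \}$. (2) If $B$ is a zero-sum sequence over $C_2^r$ with $\max\mathsf{L}(B)\le k_{\mathsf{D}}(C_2^r)$ and $|B| = \mathsf{D}_{k_{\mathsf{D}}(C_2^r)}(C_2^r)$, then $B$ is squarefree and $0$ does not occur in $B$. In particular, $k_{\mathsf{D}}(C_2^r) \le \lfloor (2^r-1)/3 \rfloor$.
   Context: $C_2^r$ is the elementary abelian $2$-group of rank $r$. A sequence over a finite abelian group $G$ is a finite unordered list of elements with repetitions; it is squarefree if no element occurs more than once; zero-sum means its terms sum to $0$; a minimal zero-sum sequence is a non-empty zero-sum sequence with no proper non-empty zero-sum subsequence; for a zero-sum sequence $B$, $\mathsf{L}(B)$ is the set of all $t$ such that $B$ is a product of $t$ minimal zero-sum sequences. $\mathsf{D}_k(G)$ is the smallest $\ell$ such that every sequence over $G$ of length at least $\ell$ has $k$ disjoint non-empty zero-sum subsequences. $\mathsf{D}_0(G)\in\mathbb{N}_0$ is the (known to exist) integer with $\mathsf{D}_k(G)=\mathsf{D}_0(G)+k\exp(G)$ for all sufficiently large $k$, and $k_{\mathsf{D}}(G)$ is the minimal $k_0\in\mathbb{N}$ with $\mathsf{D}_k(G)=\mathsf{D}_0(G)+k\exp(G)$ for all $k\ge k_0$. *)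

theory Defs
  imports Main "HOL-Library.Multiset"
begin

text \<open>The group C_2^r is modelled as the power set of {0..<r} with symmetric
difference as addition and the empty set as zero (i.e. F_2-vectors given by
their supports).\<close>

definition C2 :: "nat \<Rightarrow> nat set set" where
  "C2 r = Pow {..<r}"

definition seq_over :: "nat \<Rightarrow> nat set multiset \<Rightarrow> bool" where
  "seq_over r S \<longleftrightarrow> set_mset S \<subseteq> C2 r"

definition sigma :: "nat set multiset \<Rightarrow> nat set" where
  "sigma S = {i. odd (size (filter_mset (\<lambda>x. i \<in> x) S))}"

definition zero_sum :: "nat set multiset \<Rightarrow> bool" where
  "zero_sum S \<longleftrightarrow> sigma S = {}"

definition min_zero_sum :: "nat set multiset \<Rightarrow> bool" where
  "min_zero_sum S \<longleftrightarrow> S \<noteq> {#} \<and> zero_sum S \<and>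
     (\<forall>T. T \<subseteq># S \<and> T \<noteq> {#} \<and> zero_sum T \<longrightarrow> T = S)"

definition Lset :: "nat set multiset \<Rightarrow> nat set" where
  "Lset B = {t. \<exists>F :: nat set multiset multiset.
      size F = t \<and> (\<forall>A\<in>#F. min_zero_sum A) \<and> \<Sum>\<^sub># F = B}"

definition squarefree_seq :: "'a multiset \<Rightarrow> bool" where
  "squarefree_seq S \<longleftrightarrow> (\<forall>x. count S x \<le> 1)"

definition Dk :: "nat \<Rightarrow> nat \<Rightarrow> nat" where
  "Dk r k = (LEAST l. \<forall>S. seq_over r S \<and> size S \<ge> l \<longrightarrow>
      (\<exists>F :: nat set multiset multiset. size F = k \<and>
         (\<forall>A\<in>#F. A \<noteq> {#} \<and> zero_sum A) \<and> \<Sum>\<^sub># F \<subseteq># S))"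

text \<open>exp(C_2^r) = 2 for r \<ge> 1.\<close>
definition D0 :: "nat \<Rightarrow> nat" where
  "D0 r = (THE d. \<exists>k0. \<forall>k\<ge>k0. Dk r k = d + 2 * k)"

definition kD :: "nat \<Rightarrow> nat" where
  "kD r = (LEAST k0. k0 \<ge> 1 \<and> (\<forall>k\<ge>k0. Dk r k = D0 r + 2 * k))"

end

theory Submission imports Defs "HOL-Library.Multiset" begin

lemma sigma_plus: "sigma (A + B) = (sigma A - sigma B) \<union> (sigma B - sigma A)"
  unfolding sigma_def by auto

lemma sigma_empty[simp]: "sigma {#} = {}"
  unfolding sigma_def by auto

lemma sigma_single[simp]: "sigma {#x#} = x"
  unfolding sigma_def by auto

lemma sigma_add_mset: "sigma (add_mset x A) = (x - sigma A) \<union> (sigma A - x)"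
  using sigma_plus[of "{#x#}" A] by simp

lemma zero_sum_plus: "zero_sum A \<Longrightarrow> zero_sum B \<Longrightarrow> zero_sum (A + B)"
  unfolding zero_sum_def by (simp add: sigma_plus)

lemma zero_sum_diff: "zero_sum B \<Longrightarrow> zero_sum A \<Longrightarrow> A \<subseteq># B \<Longrightarrow> zero_sum (B - A)"
proof -
  assume a: "zero_sum B" "zero_sum A" "A \<subseteq># B"
  have "B = A + (B - A)" using a(3) by simp
  then have "sigma B = (sigma A - sigma (B - A)) \<union> (sigma (B - A) - sigma A)"
    by (metis sigma_plus)
  then show ?thesis using a unfolding zero_sum_def by auto
qed

lemma zero_sum_sum: "(\<forall>A\<in>#F. zero_sum A) \<Longrightarrow> zero_sum (\<Sum>\<^sub># F)"
proof (induction F)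
  case empty
  then show ?case by (simp add: zero_sum_def)
next
  case (add x F)
  then show ?case by (simp add: zero_sum_plus)
qed

lemma sigma_pair: "x \<noteq> y \<Longrightarrow> sigma {#x, y#} \<noteq> {}"
  using sigma_add_mset[of x "{#y#}"] by auto

lemma sigma_dbl: "sigma {#x, x#} = {}"
  using sigma_add_mset[of x "{#x#}"] by auto

definition hasdis :: "nat \<Rightarrow> nat set multiset \<Rightarrow> bool" where
  "hasdis k S \<longleftrightarrow> (\<exists>F :: nat set multiset multiset. size F = k \<and>
         (\<forall>A\<in>#F. A \<noteq> {#} \<and> zero_sum A) \<and> \<Sum>\<^sub># F \<subseteq># S)"

lemma hasdis0: "hasdis 0 S"
  unfolding hasdis_def by (rule exI[of _ "{#}"]) auto

lemma hasdis_Suc: "hasdis (Suc k) S \<Longrightarrow> hasdis k S"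
proof -
  assume "hasdis (Suc k) S"
  then obtain F where F: "size F = Suc k" "\<forall>A\<in>#F. A \<noteq> {#} \<and> zero_sum A" "\<Sum>\<^sub># F \<subseteq># S"
    unfolding hasdis_def by blast
  then obtain A F' where FF: "F = add_mset A F'" by (metis size_eq_Suc_imp_eq_union)
  have "\<Sum>\<^sub># F' \<subseteq># \<Sum>\<^sub># F" using FF by simp
  then have "\<Sum>\<^sub># F' \<subseteq># S" using F(3) by (rule subset_mset.order_trans)
  then show ?thesis unfolding hasdis_def using F FF by (intro exI[of _ F']) auto
qed

lemma hasdis_le: "hasdis k S \<Longrightarrow> j \<le> k \<Longrightarrow> hasdis j S"
  by (induction k) (auto simp: le_Suc_eq dest: hasdis_Suc)

lemma hasdis_mono: "hasdis k S \<Longrightarrow> S \<subseteq># T \<Longrightarrow> hasdis k T"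
  unfolding hasdis_def using subset_mset.order_trans by blast

lemma squarefree_mset_set: "\<forall>x. count B x \<le> 1 \<Longrightarrow> B = mset_set (set_mset B)"
proof (rule multiset_eqI)
  fix x assume a: "\<forall>x. count B x \<le> 1"
  show "count B x = count (mset_set (set_mset B)) x"
  proof (cases "x \<in># B")
    case True
    then have "count B x \<ge> 1" by simp
    with a have "count B x = 1" using le_antisym by blast
    then show ?thesis using True by (simp add: count_mset_set)
  next
    case False
    then show ?thesis by (simp add: count_mset_set not_in_iff)
  qed
qed

lemma squarefree_size: "\<forall>x. count B x \<le> 1 \<Longrightarrow> size B = card (set_mset B)"
proof -
  assume "\<forall>x. count B x \<le> 1"
  then have e: "B = mset_set (set_mset B)" by (rule squarefree_mset_set)
  have "size B = size (mset_set (set_mset B))" using e by (rule arg_cong)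
  then show ?thesis by (simp only: size_mset_set)
qed

lemma card_C2: "card (C2 r) = 2 ^ r"
  unfolding C2_def by (simp add: card_Pow)

lemma hasdis_bound: "seq_over r S \<Longrightarrow> size S \<ge> 2 * k + 2 ^ r \<Longrightarrow> hasdis k S"
proof (induction k arbitrary: S)
  case 0
  then show ?case by (simp add: hasdis0)
next
  case (Suc k)
  have "\<exists>x. count S x \<ge> 2"
  proof (rule ccontr)
    assume "\<not> ?thesis"
    then have "\<forall>x. count S x \<le> 1" by (metis not_le less_2_cases_iff Suc_leI le_refl le_SucI le_zero_eq less_Suc_eq_le one_add_one plus_1_eq_Suc)
    then have "size S = card (set_mset S)" by (rule squarefree_size)
    also have "\<dots> \<le> card (C2 r)"
      using Suc.prems(1) unfolding seq_over_def C2_def by (intro card_mono) auto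
    finally show False using Suc.prems(2) card_C2[of r] by simp
  qed
  then obtain x where x: "count S x \<ge> 2" by blast
  have sub: "{#x, x#} \<subseteq># S" using x by (auto simp: subseteq_mset_def)
  define S' where "S' = S - {#x, x#}"
  have S: "S = {#x, x#} + S'" using sub unfolding S'_def by (rule subset_mset.add_diff_inverse[symmetric])
  have "seq_over r S'" using Suc.prems(1) unfolding seq_over_def S'_def
    by (meson in_diffD subset_iff)
  moreover have "size S' \<ge> 2 * k + 2 ^ r"
  proof -
    have "size S = size S' + 2" using S by simp
    then show ?thesis using Suc.prems(2) by simp
  qed
  ultimately have "hasdis k S'" by (rule Suc.IH)
  then obtain F where F: "size F = k" "\<forall>A\<in>#F. A \<noteq> {#} \<and> zero_sum A" "\<Sum>\<^sub># F \<subseteq># S'"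
    unfolding hasdis_def by blast
  have zs: "zero_sum {#x, x#}" by (simp add: zero_sum_def sigma_dbl)
  show ?case unfolding hasdis_def
    apply (rule exI[of _ "add_mset {#x, x#} F"])
    using F zs S by auto
qed

definition Pk :: "nat \<Rightarrow> nat \<Rightarrow> nat \<Rightarrow> bool" where
  "Pk r k l \<longleftrightarrow> (\<forall>S. seq_over r S \<and> size S \<ge> l \<longrightarrow> hasdis k S)"

lemma Dk_eq: "Dk r k = (LEAST l. Pk r k l)"
  unfolding Dk_def Pk_def hasdis_def by simp

lemma Pk_bound: "Pk r k (2 * k + 2 ^ r)"
  unfolding Pk_def using hasdis_bound by blast

lemma Dk_le: "Dk r k \<le> 2 * k + 2 ^ r"
  unfolding Dk_eq by (rule Least_le) (rule Pk_bound)

lemma Dk_P: "Pk r k (Dk r k)"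
  unfolding Dk_eq by (rule LeastI) (rule Pk_bound)

lemma Dk_ub: "seq_over r S \<Longrightarrow> Dk r k \<le> size S \<Longrightarrow> hasdis k S"
  using Dk_P[of r k] unfolding Pk_def by blast

lemma Dk_lb: "seq_over r S \<Longrightarrow> \<not> hasdis k S \<Longrightarrow> size S < Dk r k"
  using Dk_ub not_le by blast

lemma Dk_lacking: "0 < Dk r k \<Longrightarrow> \<exists>S. seq_over r S \<and> size S = Dk r k - 1 \<and> \<not> hasdis k S"
proof -
  assume a: "0 < Dk r k"
  have "\<not> Pk r k (Dk r k - 1)"
  proof
    assume "Pk r k (Dk r k - 1)"
    then have "Dk r k \<le> Dk r k - 1" unfolding Dk_eq[of r k] by (rule Least_le)
    then show False using a by simp
  qed
  then obtain S where S: "seq_over r S" "size S \<ge> Dk r k - 1" "\<not> hasdis k S"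
    unfolding Pk_def by blast
  have "size S < Dk r k" using Dk_lb S by blast
  then show ?thesis using S by (intro exI[of _ S]) auto
qed

lemma Dk0: "Dk r 0 = 0"
proof -
  have "Pk r 0 0" unfolding Pk_def by (simp add: hasdis0)
  then have "Dk r 0 \<le> 0" unfolding Dk_eq by (rule Least_le)
  then show ?thesis by simp
qed

lemma Dk1: "r \<ge> 2 \<Longrightarrow> Dk r 1 \<ge> 3"
proof -
  assume r: "r \<ge> 2"
  define S where "S = {#{0::nat}, {1}#}"
  have so: "seq_over r S" unfolding S_def seq_over_def C2_def using r by auto
  have "\<not> hasdis 1 S"
  proof
    assume "hasdis 1 S"
    then obtain F where F: "size F = 1" "\<forall>A\<in>#F. A \<noteq> {#} \<and> zero_sum A" "\<Sum>\<^sub># F \<subseteq># S"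
      unfolding hasdis_def by blast
    then obtain A where A: "F = {#A#}" using size_1_singleton_mset by blast
    have A1: "A \<noteq> {#}" "sigma A = {}" "A \<subseteq># S" using F A by (auto simp: zero_sum_def)
    then obtain x where x: "x \<in># A" by blast
    have xS: "x \<in># S" by (rule mset_subset_eqD[OF A1(3) x])
    have "\<exists>i::nat. x = {i} \<and> filter_mset (\<lambda>y. i \<in> y) S = {#{i}#}"
      using xS unfolding S_def by auto
    then obtain i where i: "x = {i}" "filter_mset (\<lambda>y. i \<in> y) S = {#{i}#}" by blast
    have "filter_mset (\<lambda>y. i \<in> y) A \<subseteq># filter_mset (\<lambda>y. i \<in> y) S"
      using A1(3) by (rule multiset_filter_mono)
    then have le: "size (filter_mset (\<lambda>y. i \<in> y) A) \<le> 1" using i(2) size_mset_mono by fastforce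
    have "x \<in># filter_mset (\<lambda>y. i \<in> y) A" using x i(1) by simp
    then have "size (filter_mset (\<lambda>y. i \<in> y) A) \<noteq> 0" by auto
    with le have "size (filter_mset (\<lambda>y. i \<in> y) A) = 1" by arith
    then have "i \<in> sigma A" unfolding sigma_def by simp
    then show False using A1(2) by simp
  qed
  then have "size S < Dk r 1" using so Dk_lb by blast
  then show ?thesis unfolding S_def by simp
qed

lemma split1:
  assumes "\<Sum>\<^sub># F \<subseteq># S + {#g#}"
  shows "\<Sum>\<^sub># F \<subseteq># S \<or> (\<exists>A. A \<in># F \<and> g \<in># A \<and> \<Sum>\<^sub># (F - {#A#}) + (A - {#g#}) \<subseteq># S)"
proof (cases "g \<in># \<Sum>\<^sub># F")
  case False
  have "\<forall>y. count (\<Sum>\<^sub># F) y \<le> count S y"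
  proof
    fix y
    have "count (\<Sum>\<^sub># F) y \<le> count (S + {#g#}) y" using assms by (rule mset_subset_eq_count)
    moreover have c0: "count (\<Sum>\<^sub># F) g = 0" using False by (simp only: not_in_iff)
    ultimately show "count (\<Sum>\<^sub># F) y \<le> count S y"
    proof (cases "y = g")
      case True
      then show ?thesis by (simp only: True c0 le0)
    qed simp
  qed
  then show ?thesis by (simp add: subseteq_mset_def)
next
  case True
  then obtain A where A: "A \<in># F" "g \<in># A" by auto
  have e1: "\<Sum>\<^sub># F = A + \<Sum>\<^sub># (F - {#A#})" using A(1) by (metis sum_mset.remove)
  have e2: "\<Sum>\<^sub># F = add_mset g ((A - {#g#}) + \<Sum>\<^sub># (F - {#A#}))"
    using e1 insert_DiffM[OF A(2)] by simp
  have e: "\<Sum>\<^sub># (F - {#A#}) + (A - {#g#}) = \<Sum>\<^sub># F - {#g#}"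
    by (subst e2) simp
  have "\<forall>y. count (\<Sum>\<^sub># F - {#g#}) y \<le> count S y"
  proof
    fix y
    have "count (\<Sum>\<^sub># F) y \<le> count (S + {#g#}) y" using assms by (rule mset_subset_eq_count)
    then show "count (\<Sum>\<^sub># F - {#g#}) y \<le> count S y" by (cases "y = g") auto
  qed
  then have "\<Sum>\<^sub># F - {#g#} \<subseteq># S" by (simp add: subseteq_mset_def)
  then show ?thesis using A e by auto
qed

lemma hasdisI: "size F = k \<Longrightarrow> (\<forall>A\<in>#F. A \<noteq> {#} \<and> zero_sum A) \<Longrightarrow> \<Sum>\<^sub># F \<subseteq># S \<Longrightarrow> hasdis k S"
  unfolding hasdis_def by blast

lemma sigma_remove: "g \<in># A \<Longrightarrow> zero_sum A \<Longrightarrow> sigma (A - {#g#}) = g"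
proof -
  assume a: "g \<in># A" "zero_sum A"
  have "sigma A = (g - sigma (A - {#g#})) \<union> (sigma (A - {#g#}) - g)"
    using sigma_add_mset[of g "A - {#g#}"] insert_DiffM[OF a(1)] by simp
  then show ?thesis using a(2) unfolding zero_sum_def by blast
qed

lemma key:
  assumes ns: "\<not> hasdis k S" and g: "g \<noteq> {}"
  shows "\<not> hasdis (Suc k) (S + {#g, g#})"
proof
  assume "hasdis (Suc k) (S + {#g, g#})"
  then obtain F where F: "size F = Suc k" "\<forall>A\<in>#F. A \<noteq> {#} \<and> zero_sum A"
    "\<Sum>\<^sub># F \<subseteq># (S + {#g#}) + {#g#}"
    unfolding hasdis_def by auto
  from split1[OF F(3)] show False
  proof
    assume c1: "\<Sum>\<^sub># F \<subseteq># S + {#g#}"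
    from split1[OF c1] show False
    proof
      assume "\<Sum>\<^sub># F \<subseteq># S"
      then have "hasdis (Suc k) S" using F by (intro hasdisI) auto
      then show False using ns hasdis_Suc by blast
    next
      assume "\<exists>A. A \<in># F \<and> g \<in># A \<and> \<Sum>\<^sub># (F - {#A#}) + (A - {#g#}) \<subseteq># S"
      then obtain A where A: "A \<in># F" "\<Sum>\<^sub># (F - {#A#}) + (A - {#g#}) \<subseteq># S" by blast
      have "\<Sum>\<^sub># (F - {#A#}) \<subseteq># S" using A(2) by (meson mset_subset_eq_add_left subset_mset.order_trans)
      moreover have "size (F - {#A#}) = k" using F(1) A(1) by (simp add: size_Diff_singleton)
      ultimately have "hasdis k S" using F(2) by (intro hasdisI) (auto dest: in_diffD)
      then show False using ns by blast
    qed
  next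
    assume "\<exists>A. A \<in># F \<and> g \<in># A \<and> \<Sum>\<^sub># (F - {#A#}) + (A - {#g#}) \<subseteq># S + {#g#}"
    then obtain A where A: "A \<in># F" "g \<in># A" "\<Sum>\<^sub># (F - {#A#}) + (A - {#g#}) \<subseteq># S + {#g#}" by blast
    define F1 where "F1 = F - {#A#}"
    define U1 where "U1 = A - {#g#}"
    have F1s: "size F1 = k" using F(1) A(1) unfolding F1_def by (simp add: size_Diff_singleton)
    have F1p: "\<forall>B\<in>#F1. B \<noteq> {#} \<and> zero_sum B" using F(2) unfolding F1_def by (auto dest: in_diffD)
    have sU1: "sigma U1 = g" unfolding U1_def using A(2) F(2) A(1) sigma_remove by blast
    have U1ne: "U1 \<noteq> {#}" using sU1 g by auto
    have G: "\<Sum>\<^sub># (add_mset U1 F1) \<subseteq># S + {#g#}" using A(3) unfolding F1_def U1_def by (simp add: add.commute)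
    from split1[OF G] show False
    proof
      assume "\<Sum>\<^sub># (add_mset U1 F1) \<subseteq># S"
      then have "\<Sum>\<^sub># F1 \<subseteq># S" by (simp add: subset_mset.le_iff_add) (metis add.left_commute subset_mset.le_iff_add union_commute)
      then have "hasdis k S" using F1s F1p by (intro hasdisI) auto
      then show False using ns by blast
    next
      assume "\<exists>C. C \<in># add_mset U1 F1 \<and> g \<in># C \<and> \<Sum>\<^sub># (add_mset U1 F1 - {#C#}) + (C - {#g#}) \<subseteq># S"
      then obtain C where C: "C \<in># add_mset U1 F1" "g \<in># C" "\<Sum>\<^sub># (add_mset U1 F1 - {#C#}) + (C - {#g#}) \<subseteq># S" by blast
      show False
      proof (cases "C \<in># F1")
        case True
        define F2 where "F2 = F1 - {#C#}"
        define U2 where "U2 = C - {#g#}"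
        have e: "add_mset U1 F1 - {#C#} = add_mset U1 F2" unfolding F2_def using True by simp
        have sU2: "sigma U2 = g" unfolding U2_def using C(2) F1p True sigma_remove by blast
        have zs: "zero_sum (U1 + U2)" unfolding zero_sum_def by (simp add: sigma_plus sU1 sU2)
        have ne: "U1 + U2 \<noteq> {#}" using U1ne by simp
        have "\<Sum>\<^sub># (add_mset (U1 + U2) F2) \<subseteq># S" using C(3) unfolding e U2_def
          by (simp add: ac_simps)
        moreover have "size (add_mset (U1 + U2) F2) = k"
        proof -
          have "size F1 \<noteq> 0" using True by auto
          then show ?thesis using F1s True unfolding F2_def by (simp add: size_Diff_singleton)
        qed
        moreover have "\<forall>B\<in>#add_mset (U1 + U2) F2. B \<noteq> {#} \<and> zero_sum B"
          using F1p zs ne unfolding F2_def by (auto dest: in_diffD)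
        ultimately have "hasdis k S" by (intro hasdisI)
        then show False using ns by blast
      next
        case False
        then have "C = U1" using C(1) by auto
        then have "\<Sum>\<^sub># F1 + (C - {#g#}) \<subseteq># S" using C(3) by simp
        then have "\<Sum>\<^sub># F1 \<subseteq># S" by (meson mset_subset_eq_add_left subset_mset.order_trans)
        then have "hasdis k S" using F1s F1p by (intro hasdisI) auto
        then show False using ns by blast
      qed
    qed
  qed
qed

lemma Dk_step: "r \<ge> 2 \<Longrightarrow> Dk r (Suc k) \<ge> Dk r k + 2"
proof (cases k)
  case 0
  assume "r \<ge> 2"
  then show ?thesis using Dk1[of r] Dk0[of r] 0 by simp
next
  case (Suc j)
  assume r: "r \<ge> 2"
  have "\<not> hasdis k {#}"
  proof
    assume "hasdis k {#}"
    then obtain F where F: "size F = k" "\<forall>A\<in>#F. A \<noteq> {#} \<and> zero_sum A" "\<Sum>\<^sub># F \<subseteq># {#}"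
      unfolding hasdis_def by blast
    have "F \<noteq> {#}" using F(1) Suc by auto
    then obtain A where "A \<in># F" by blast
    then show False using F by auto
  qed
  then have "0 < Dk r k" using Dk_lb[of r "{#}" k] by (simp add: seq_over_def)
  then obtain S where S: "seq_over r S" "size S = Dk r k - 1" "\<not> hasdis k S"
    using Dk_lacking by blast
  have g: "{0::nat} \<noteq> {}" "{0::nat} \<in> C2 r" using r unfolding C2_def by auto
  have "\<not> hasdis (Suc k) (S + {#{0}, {0}#})" by (rule key[OF S(3) g(1)])
  moreover have "seq_over r (S + {#{0}, {0}#})" using S(1) g(2) unfolding seq_over_def by auto
  ultimately have "size (S + {#{0}, {0}#}) < Dk r (Suc k)" using Dk_lb by blast
  then show ?thesis using S(2) \<open>0 < Dk r k\<close> by simp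
qed

lemma Dk_mono2: assumes r: "r \<ge> 2" and kk: "k \<le> k'" shows "Dk r k + 2 * (k' - k) \<le> Dk r k'"
  using kk
proof (induction k' rule: dec_induct)
  case base
  then show ?case by simp
next
  case (step n)
  then show ?case using Dk_step[OF r, of n] by (simp add: Suc_diff_le)
qed

lemma Dk_ge: "r \<ge> 2 \<Longrightarrow> Dk r k \<ge> 2 * k"
  using Dk_mono2[of r 0 k] by (simp add: Dk0)

lemma D0_props:
  assumes r: "r \<ge> 2"
  shows "(\<forall>k. Dk r k \<le> D0 r + 2 * k) \<and> (\<exists>k0. \<forall>k\<ge>k0. Dk r k = D0 r + 2 * k)"
proof -
  define f where "f k = Dk r k - 2 * k" for k
  have fmono: "f k \<le> f k'" if "k \<le> k'" for k k'
    using Dk_mono2[OF r that] Dk_ge[OF r, of k] Dk_ge[OF r, of k'] that unfolding f_def by simp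
  have fb: "f k \<le> 2 ^ r" for k using Dk_le[of r k] unfolding f_def by simp
  have fin: "finite (range f)" by (rule finite_subset[of _ "{..2^r}"]) (use fb in auto)
  define d where "d = Max (range f)"
  have fle: "f k \<le> d" for k unfolding d_def using fin by (intro Max_ge) auto
  have "d \<in> range f" unfolding d_def using fin by (intro Max_in) auto
  then obtain k0 where k0: "f k0 = d" by blast
  have eq: "\<forall>k\<ge>k0. Dk r k = d + 2 * k"
  proof (intro allI impI)
    fix k assume "k0 \<le> k"
    then have "f k = d" using fmono[of k0 k] fle[of k] k0 by simp
    then show "Dk r k = d + 2 * k" using Dk_ge[OF r, of k] unfolding f_def by simp
  qed
  have "D0 r = d" unfolding D0_def
  proof (rule the_equality)
    show "\<exists>k0. \<forall>k\<ge>k0. Dk r k = d + 2 * k" using eq by blast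
  next
    fix d' assume "\<exists>k0. \<forall>k\<ge>k0. Dk r k = d' + 2 * k"
    then obtain k1 where k1: "\<forall>k\<ge>k1. Dk r k = d' + 2 * k" by blast
    have a: "Dk r (max k0 k1) = d' + 2 * max k0 k1" using k1 by simp
    have b: "Dk r (max k0 k1) = d + 2 * max k0 k1" using eq by simp
    from a b show "d' = d" by simp
  qed
  moreover have "\<forall>k. Dk r k \<le> d + 2 * k" using fle Dk_ge[OF r] unfolding f_def
    by (metis add.commute le_diff_conv)
  ultimately show ?thesis using eq by auto
qed

lemma D0_stay: "r \<ge> 2 \<Longrightarrow> Dk r k = D0 r + 2 * k \<Longrightarrow> k \<le> k' \<Longrightarrow> Dk r k' = D0 r + 2 * k'"
  using Dk_mono2[of r k k'] D0_props[of r] by (metis add.assoc add_mult_distrib2 le_add_diff_inverse le_antisym)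

lemma kD_props:
  assumes r: "r \<ge> 2"
  shows "kD r \<ge> 1 \<and> Dk r (kD r) = D0 r + 2 * kD r \<and>
    (\<forall>k. 1 \<le> k \<longrightarrow> k < kD r \<longrightarrow> Dk r k \<noteq> D0 r + 2 * k)"
proof -
  define Q where "Q k0 \<longleftrightarrow> k0 \<ge> 1 \<and> (\<forall>k\<ge>k0. Dk r k = D0 r + 2 * k)" for k0
  have kd: "kD r = (LEAST k. Q k)" unfolding kD_def Q_def by simp
  obtain k0 where k0: "\<forall>k\<ge>k0. Dk r k = D0 r + 2 * k" using D0_props[OF r] by blast
  have "Q (max k0 1)" unfolding Q_def using k0 by auto
  then have q: "Q (kD r)" unfolding kd by (rule LeastI)
  have nq: "\<not> Q k" if "k < kD r" for k using not_less_Least[of k Q] that unfolding kd by blast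
  show ?thesis
  proof (intro conjI allI impI)
    show "kD r \<ge> 1" using q unfolding Q_def by blast
    show "Dk r (kD r) = D0 r + 2 * kD r" using q unfolding Q_def by blast
  next
    fix k assume k: "1 \<le> k" "k < kD r"
    show "Dk r k \<noteq> D0 r + 2 * k"
    proof
      assume "Dk r k = D0 r + 2 * k"
      then have "Q k" unfolding Q_def using k D0_stay[OF r] by blast
      then show False using nq k by blast
    qed
  qed
qed

lemma part1:
  assumes r: "r \<ge> 2"
  shows "kD r = (LEAST k. k \<ge> 1 \<and> int (D0 r) = int (Dk r k) - 2 * int k)"
proof -
  have "(\<lambda>k0. k0 \<ge> 1 \<and> (\<forall>k\<ge>k0. Dk r k = D0 r + 2 * k)) =
        (\<lambda>k. k \<ge> 1 \<and> int (D0 r) = int (Dk r k) - 2 * int k)"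
  proof (rule ext)
    fix k0
    have "(\<forall>k\<ge>k0. Dk r k = D0 r + 2 * k) \<longleftrightarrow> Dk r k0 = D0 r + 2 * k0"
      using D0_stay[OF r] by blast
    moreover have "Dk r k0 = D0 r + 2 * k0 \<longleftrightarrow> int (D0 r) = int (Dk r k0) - 2 * int k0"
      by linarith
    ultimately show "(k0 \<ge> 1 \<and> (\<forall>k\<ge>k0. Dk r k = D0 r + 2 * k)) =
        (k0 \<ge> 1 \<and> int (D0 r) = int (Dk r k0) - 2 * int k0)" by simp
  qed
  then show ?thesis unfolding kD_def by simp
qed

lemma size_sum_ge: "(\<forall>A\<in>#F. A \<noteq> {#}) \<Longrightarrow> size F \<le> size (\<Sum>\<^sub># F)"
proof (induction F)
  case empty then show ?case by simp
next
  case (add A F)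
  then have "size A \<ge> 1" by (simp add: Suc_le_eq nonempty_has_size)
  then show ?case using add by simp
qed

lemma size_sum_ge3: "(\<forall>A\<in>#(F :: 'a multiset multiset). size A \<ge> 3) \<Longrightarrow> 3 * size F \<le> size (\<Sum>\<^sub># F)"
proof (induction F)
  case empty then show ?case by simp
next
  case (add A F)
  then have "3 * size F \<le> size (\<Sum>\<^sub># F)" "3 \<le> size A" by auto
  moreover have "size (A + \<Sum>\<^sub># F) = size A + size (\<Sum>\<^sub># F)" by (rule size_union)
  ultimately show ?case by simp
qed

lemma min_zs_ne: "min_zero_sum A \<Longrightarrow> A \<noteq> {#} \<and> zero_sum A"
  unfolding min_zero_sum_def by blast

lemma Lset_le: "t \<in> Lset B \<Longrightarrow> t \<le> size B"
  unfolding Lset_def using size_sum_ge min_zs_ne by blast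

lemma Lset_finite: "finite (Lset B)"
  by (rule finite_subset[of _ "{..size B}"]) (auto dest: Lset_le)

lemma factor_ex: "zero_sum A \<Longrightarrow> \<exists>F. (\<forall>X\<in>#F. min_zero_sum X) \<and> \<Sum>\<^sub># F = A \<and> (A \<noteq> {#} \<longrightarrow> size F \<ge> 1)"
proof (induction "size A" arbitrary: A rule: less_induct)
  case less
  show ?case
  proof (cases "A = {#}")
    case True
    then show ?thesis by (intro exI[of _ "{#}"]) auto
  next
    case ne: False
    show ?thesis
    proof (cases "min_zero_sum A")
      case True
      then show ?thesis by (intro exI[of _ "{#A#}"]) auto
    next
      case False
      then obtain T where T: "T \<subseteq># A" "T \<noteq> {#}" "zero_sum T" "T \<noteq> A"
        using ne less.prems unfolding min_zero_sum_def by blast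
      have "T \<subset># A" using T by (simp add: subset_mset.le_neq_trans)
      then have sT: "size T < size A" by (rule mset_subset_size)
      have zR: "zero_sum (A - T)" using zero_sum_diff less.prems T by blast
      have sR: "size (A - T) < size A"
      proof -
        have "size T > 0" using T(2) nonempty_has_size by blast
        moreover have "size T \<le> size A" by (rule size_mset_mono[OF T(1)])
        ultimately show ?thesis by (simp add: size_Diff_submset[OF T(1)])
      qed
      obtain F1 where F1: "\<forall>X\<in>#F1. min_zero_sum X" "\<Sum>\<^sub># F1 = T" "size F1 \<ge> 1"
        using less.hyps[OF sT T(3)] T(2) by blast
      obtain F2 where F2: "\<forall>X\<in>#F2. min_zero_sum X" "\<Sum>\<^sub># F2 = A - T"
        using less.hyps[OF sR zR] by blast
      show ?thesis
        apply (rule exI[of _ "F1 + F2"])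
        using F1 F2 T(1) by auto
    qed
  qed
qed

lemma refine: "(\<forall>A\<in>#G. A \<noteq> {#} \<and> zero_sum A) \<Longrightarrow>
  \<exists>F. (\<forall>X\<in>#F. min_zero_sum X) \<and> \<Sum>\<^sub># F = \<Sum>\<^sub># G \<and> size F \<ge> size G"
proof (induction G)
  case empty
  then show ?case by (intro exI[of _ "{#}"]) auto
next
  case (add A G)
  then obtain F where F: "\<forall>X\<in>#F. min_zero_sum X" "\<Sum>\<^sub># F = \<Sum>\<^sub># G" "size F \<ge> size G" by auto
  obtain F1 where F1: "\<forall>X\<in>#F1. min_zero_sum X" "\<Sum>\<^sub># F1 = A" "size F1 \<ge> 1"
    using factor_ex[of A] add.prems by auto
  show ?case by (rule exI[of _ "F1 + F"]) (use F F1 in auto)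
qed

lemma part_Lset: "(\<forall>A\<in>#G. A \<noteq> {#} \<and> zero_sum A) \<Longrightarrow> \<exists>t. t \<ge> size G \<and> t \<in> Lset (\<Sum>\<^sub># G)"
  using refine unfolding Lset_def by blast

lemma Lset_ne: "zero_sum B \<Longrightarrow> B \<noteq> {#} \<Longrightarrow> \<exists>t. t \<ge> 1 \<and> t \<in> Lset B"
  using factor_ex[of B] unfolding Lset_def by blast

lemma d1:
  assumes so: "seq_over r B" and zs: "zero_sum B" and L: "\<forall>t\<in>Lset B. t \<le> k"
  shows "size B \<le> Dk r k"
proof (cases "B = {#}")
  case True then show ?thesis by simp
next
  case False
  then obtain g where g: "g \<in># B" by blast
  define S where "S = B - {#g#}"
  have sB: "size B = Suc (size S)" unfolding S_def using g
    by (metis insert_DiffM size_add_mset)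
  have soS: "seq_over r S" using so unfolding seq_over_def S_def by (meson in_diffD subset_iff)
  show ?thesis
  proof (rule ccontr)
    assume "\<not> ?thesis"
    then have "Dk r k \<le> size S" using sB by simp
    then have "hasdis k S" using Dk_ub soS by blast
    then obtain F where F: "size F = k" "\<forall>A\<in>#F. A \<noteq> {#} \<and> zero_sum A" "\<Sum>\<^sub># F \<subseteq># S"
      unfolding hasdis_def by blast
    have SB: "S \<subseteq># B" unfolding S_def by simp
    have FB: "\<Sum>\<^sub># F \<subseteq># B" using F(3) SB by (rule subset_mset.order_trans)
    define R where "R = B - \<Sum>\<^sub># F"
    have zR: "zero_sum R" unfolding R_def using zs zero_sum_sum[of F] F(2) FB zero_sum_diff by blast
    have "count (\<Sum>\<^sub># F) g \<le> count S g" using F(3) by (rule mset_subset_eq_count)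
    moreover have "count S g = count B g - 1" unfolding S_def by simp
    moreover have "0 < count B g" using g by simp
    moreover have "count R g = count B g - count (\<Sum>\<^sub># F) g" unfolding R_def by (rule count_diff)
    ultimately have "count R g \<ge> 1" by arith
    then have Rne: "R \<noteq> {#}" by auto
    have sum: "\<Sum>\<^sub># (add_mset R F) = B" unfolding R_def using FB by simp
    have "\<forall>A\<in>#add_mset R F. A \<noteq> {#} \<and> zero_sum A" using F(2) zR Rne by auto
    from part_Lset[OF this] obtain t where "t \<ge> size (add_mset R F)" "t \<in> Lset B" unfolding sum by blast
    then show False using L F(1) by fastforce
  qed
qed

lemma atom_single: "min_zero_sum {#{}#}"
  unfolding min_zero_sum_def
proof (intro conjI allI impI)
  show "{#{}#} \<noteq> {#}" by simp
  show "zero_sum {#{}#}" unfolding zero_sum_def by simp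
  fix T :: "nat set multiset" assume T: "T \<subseteq># {#{}#} \<and> T \<noteq> {#} \<and> zero_sum T"
  then show "T = {#{}#}" by (intro nonempty_subseteq_mset_eq_single) auto
qed

lemma atom_dbl: assumes g: "g \<noteq> {}" shows "min_zero_sum {#g, g#}"
  unfolding min_zero_sum_def
proof (intro conjI allI impI)
  show "{#g, g#} \<noteq> {#}" by simp
  show "zero_sum {#g, g#}" unfolding zero_sum_def by (rule sigma_dbl)
  fix T assume T: "T \<subseteq># {#g, g#} \<and> T \<noteq> {#} \<and> zero_sum T"
  have T1: "T \<subseteq># {#g, g#}" by (rule conjunct1[OF T])
  have T2: "T \<noteq> {#}" by (rule conjunct1[OF conjunct2[OF T]])
  have T3: "sigma T = {}" using conjunct2[OF conjunct2[OF T]] unfolding zero_sum_def .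
  from T2 obtain x where x: "x \<in># T" by blast
  have "x \<in># {#g, g#}" by (rule mset_subset_eqD[OF T1 x])
  then have xg: "x = g" by simp
  obtain T' where T': "T = add_mset g T'" using multi_member_split[OF x] unfolding xg by blast
  have "T' \<subseteq># {#g#}" using T1 unfolding T' by simp
  moreover have "T' \<noteq> {#}"
  proof
    assume "T' = {#}"
    then have "sigma T = g" unfolding T' by simp
    then show False using T3 g by simp
  qed
  ultimately have "T' = {#g#}" by (intro nonempty_subseteq_mset_eq_single) auto
  then show "T = {#g, g#}" unfolding T' by simp
qed

lemma Lset_add: "min_zero_sum A \<Longrightarrow> t \<in> Lset B \<Longrightarrow> Suc t \<in> Lset (A + B)"
  unfolding Lset_def
proof -
  assume A: "min_zero_sum A" and "t \<in> {t. \<exists>F. size F = t \<and> (\<forall>A\<in>#F. min_zero_sum A) \<and> \<Sum>\<^sub># F = B}"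
  then obtain F where "size F = t" "\<forall>A\<in>#F. min_zero_sum A" "\<Sum>\<^sub># F = B" by blast
  then show "Suc t \<in> {t. \<exists>F. size F = t \<and> (\<forall>A\<in>#F. min_zero_sum A) \<and> \<Sum>\<^sub># F = A + B}"
    using A by (intro CollectI exI[of _ "add_mset A F"]) auto
qed

lemma part2:
  assumes r: "r \<ge> 2" and so: "seq_over r B" and zs: "zero_sum B"
    and L: "\<forall>t\<in>Lset B. t \<le> kD r" and sz: "size B = Dk r (kD r)"
  shows "squarefree_seq B \<and> {} \<notin># B"
proof -
  define K where "K = kD r"
  have K: "K \<ge> 1" "Dk r K = D0 r + 2 * K" "\<forall>k. 1 \<le> k \<longrightarrow> k < K \<longrightarrow> Dk r k \<noteq> D0 r + 2 * k"
    using kD_props[OF r] unfolding K_def by auto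
  have step: "Dk r (K - 1) + 2 \<le> Dk r K" using Dk_step[OF r, of "K - 1"] K(1) by simp
  have red: "size B' \<le> Dk r (K - 1)" if B: "B = A + B'" and A: "min_zero_sum A" for A B'
  proof (rule d1)
    show "seq_over r B'" using so B unfolding seq_over_def by auto
    have "zero_sum A" using A min_zs_ne by blast
    then have "zero_sum (B - A)" using zs B zero_sum_diff[of B A] by simp
    then show "zero_sum B'" using B by simp
    show "\<forall>t\<in>Lset B'. t \<le> K - 1"
    proof
      fix t assume "t \<in> Lset B'"
      then have "Suc t \<in> Lset B" using Lset_add[OF A] B by simp
      then show "t \<le> K - 1" using L unfolding K_def by fastforce
    qed
  qed
  have no0: "{} \<notin># B"
  proof
    assume "{} \<in># B"
    then obtain B' where "B = add_mset {} B'" by (blast dest: multi_member_split)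
    then have B: "B = {#{}#} + B'" by simp
    have "size B' \<le> Dk r (K - 1)" using red[OF B atom_single] .
    then show False using B sz step unfolding K_def by simp
  qed
  have sqf: "squarefree_seq B"
    unfolding squarefree_seq_def
  proof (rule ccontr)
    assume "\<not> (\<forall>x. count B x \<le> 1)"
    then obtain g where "\<not> count B g \<le> 1" by blast
    then have g: "count B g \<ge> 2" by simp
    have g0: "g \<noteq> {}" using g no0 by (auto simp: not_in_iff)
    have sub: "{#g, g#} \<subseteq># B" using g by (auto simp: subseteq_mset_def)
    have B: "B = {#g, g#} + (B - {#g, g#})" using sub by (rule subset_mset.add_diff_inverse[symmetric])
    have "size (B - {#g, g#}) \<le> Dk r (K - 1)" using red[OF B atom_dbl[OF g0]] .
    moreover have "size B = size (B - {#g, g#}) + 2" by (subst B) simp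
    ultimately have e: "Dk r K = Dk r (K - 1) + 2" using step sz unfolding K_def by simp
    show False
    proof (cases "K = 1")
      case True
      then show False using e Dk0[of r] Dk1[OF r] by simp
    next
      case False
      then have "Dk r (K - 1) = D0 r + 2 * (K - 1)" using e K(2) K(1) by simp
      moreover have "1 \<le> K - 1" "K - 1 < K" using False K(1) by auto
      ultimately show False using K(3) by blast
    qed
  qed
  show ?thesis using no0 sqf by blast
qed


lemma atom_size3:
  assumes A: "min_zero_sum A" and AB: "A \<subseteq># B" and sq: "squarefree_seq B" and n0: "{} \<notin># B"
  shows "size A \<ge> 3"
proof -
  have Ane: "A \<noteq> {#}" and zA: "sigma A = {}" using A unfolding min_zero_sum_def zero_sum_def by auto
  have s0: "size A \<noteq> 0" using Ane by simp
  have s1: "size A \<noteq> 1"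
  proof
    assume "size A = 1"
    then obtain x where x: "A = {#x#}" using size_1_singleton_mset by blast
    then have "x = {}" using zA by simp
    moreover have "x \<in># B" using AB x by simp
    ultimately show False using n0 by simp
  qed
  have s2: "size A \<noteq> 2"
  proof
    assume "size A = 2"
    then obtain x A1 where A1: "A = add_mset x A1" "size A1 = Suc 0"
      using size_eq_Suc_imp_eq_union[of A 1] by auto
    then obtain y where y: "A1 = {#y#}" using size_1_singleton_mset by auto
    have Ae: "A = {#x, y#}" using A1 y by simp
    show False
    proof (cases "x = y")
      case True
      have "count A x \<le> count B x" using AB by (rule mset_subset_eq_count)
      moreover have "count A x = 2" using Ae True by simp
      moreover have "count B x \<le> 1" using sq unfolding squarefree_seq_def by blast
      ultimately show False by linarith
    next
      case False
      then show False using sigma_pair[OF False] zA Ae by simp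
    qed
  qed
  show ?thesis using s0 s1 s2 by linarith
qed

lemma sigma_C2: "seq_over r S \<Longrightarrow> sigma S \<in> C2 r"
proof -
  assume so: "seq_over r S"
  have "sigma S \<subseteq> {..<r}"
  proof
    fix i assume "i \<in> sigma S"
    then have "odd (size (filter_mset (\<lambda>x. i \<in> x) S))" unfolding sigma_def by simp
    then have "size (filter_mset (\<lambda>x. i \<in> x) S) \<noteq> 0" by (intro notI) simp
    then have "filter_mset (\<lambda>x. i \<in> x) S \<noteq> {#}" by (intro notI) simp
    then obtain x where "x \<in># filter_mset (\<lambda>x. i \<in> x) S" by blast
    then have "x \<in># S" "i \<in> x" by auto
    then show "i \<in> {..<r}" using so unfolding seq_over_def C2_def by auto
  qed
  then show ?thesis unfolding C2_def by simp
qed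

lemma part3:
  assumes r: "r \<ge> 2"
  shows "kD r \<le> (2 ^ r - 1) div 3"
proof -
  define K where "K = kD r"
  have K: "K \<ge> 1" "Dk r K = D0 r + 2 * K"
    using kD_props[OF r] unfolding K_def by auto
  have step: "Dk r (K - 1) + 2 \<le> Dk r K" using Dk_step[OF r, of "K - 1"] K(1) by simp
  have "0 < Dk r K" using step by simp
  then obtain S where S: "seq_over r S" "size S = Dk r K - 1" "\<not> hasdis K S"
    using Dk_lacking by blast
  define y where "y = sigma S"
  define B where "B = add_mset y S"
  have soB: "seq_over r B" using S(1) sigma_C2[OF S(1)] unfolding B_def y_def seq_over_def by auto
  have zB: "zero_sum B" unfolding B_def zero_sum_def y_def by (simp add: sigma_add_mset)
  have szB: "size B = Dk r K" unfolding B_def using S(2) \<open>0 < Dk r K\<close> by simp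
  have L: "\<forall>t\<in>Lset B. t \<le> K"
  proof
    fix t assume "t \<in> Lset B"
    then obtain F where F: "size F = t" "\<forall>A\<in>#F. min_zero_sum A" "\<Sum>\<^sub># F = B"
      unfolding Lset_def by blast
    show "t \<le> K"
    proof (rule ccontr)
      assume tK: "\<not> t \<le> K"
      have "y \<in># \<Sum>\<^sub># F" using F(3) unfolding B_def by simp
      then obtain A where A: "A \<in># F" "y \<in># A" by auto
      define F1 where "F1 = F - {#A#}"
      have e1: "\<Sum>\<^sub># F = A + \<Sum>\<^sub># F1" unfolding F1_def using A(1) by (metis sum_mset.remove)
      obtain A' where A': "A = add_mset y A'" using multi_member_split[OF A(2)] by blast
      have "add_mset y S = \<Sum>\<^sub># F" using F(3) unfolding B_def by simp
      also have "\<dots> = A + \<Sum>\<^sub># F1" by (rule e1)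
      also have "\<dots> = add_mset y (A' + \<Sum>\<^sub># F1)" unfolding A' by simp
      finally have "add_mset y S = add_mset y (A' + \<Sum>\<^sub># F1)" .
      then have "S = A' + \<Sum>\<^sub># F1" by simp
      then have sub: "\<Sum>\<^sub># F1 \<subseteq># S" by simp
      have sF1: "size F1 = t - 1" unfolding F1_def using A(1) F(1) by (simp add: size_Diff_singleton)
      have "\<forall>X\<in>#F1. X \<noteq> {#} \<and> zero_sum X"
      proof
        fix X assume "X \<in># F1"
        then have "X \<in># F" unfolding F1_def by (rule in_diffD)
        then show "X \<noteq> {#} \<and> zero_sum X" using F(2) min_zs_ne by blast
      qed
      then have hd: "hasdis (t - 1) S" using sF1 sub by (intro hasdisI)
      have "K \<le> t - 1" using tK by simp
      then have "hasdis K S" by (rule hasdis_le[OF hd])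
      then show False using S(3) by blast
    qed
  qed
  have p2: "squarefree_seq B \<and> {} \<notin># B" using part2[OF r soB zB] L szB unfolding K_def by blast
  have "size B = card (set_mset B)" using p2 unfolding squarefree_seq_def by (intro squarefree_size) blast
  also have "\<dots> \<le> card (C2 r - {{}})"
    using soB p2 unfolding seq_over_def C2_def by (intro card_mono) auto
  also have "\<dots> = 2 ^ r - 1" using card_C2[of r] by (simp add: C2_def card_Diff_singleton)
  finally have up: "size B \<le> 2 ^ r - 1" .
  have "\<exists>t\<in>Lset B. t \<ge> K"
  proof (rule ccontr)
    assume "\<not> ?thesis"
    then have "\<forall>t\<in>Lset B. t \<le> K - 1" by auto
    then have "size B \<le> Dk r (K - 1)" using d1[OF soB zB] by blast
    then show False using step szB by simp
  qed
  then obtain t F where t: "t \<ge> K" "size F = t" "\<forall>A\<in>#F. min_zero_sum A" "\<Sum>\<^sub># F = B"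
    unfolding Lset_def by blast
  have "\<forall>A\<in>#F. size A \<ge> 3"
  proof
    fix A assume A: "A \<in># F"
    have "\<Sum>\<^sub># F = A + \<Sum>\<^sub># (F - {#A#})" using A by (metis sum_mset.remove)
    then have "A \<subseteq># \<Sum>\<^sub># F" by simp
    then have "A \<subseteq># B" using t(4) by simp
    then show "size A \<ge> 3" using atom_size3 t(3) A p2 by blast
  qed
  then have "3 * size F \<le> size (\<Sum>\<^sub># F)" by (rule size_sum_ge3)
  then have "3 * K \<le> 2 ^ r - 1" using t up by simp
  then have "(3 * K) div 3 \<le> (2 ^ r - 1) div 3" by (rule div_le_mono)
  then show ?thesis unfolding K_def by simp
qed

theorem proposition7p5:
  fixes r :: nat
  assumes "r \<ge> 2"
  shows "kD r = (LEAST k. k \<ge> 1 \<and> int (D0 r) = int (Dk r k) - 2 * int k)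
    \<and> (\<forall>B. seq_over r B \<and> zero_sum B \<and> Max (Lset B) \<le> kD r \<and>
           size B = Dk r (kD r) \<longrightarrow> squarefree_seq B \<and> {} \<notin># B)
    \<and> kD r \<le> (2 ^ r - 1) div 3"
proof (intro conjI allI impI)
  show "kD r = (LEAST k. k \<ge> 1 \<and> int (D0 r) = int (Dk r k) - 2 * int k)"
    using part1[OF assms] .
  show "kD r \<le> (2 ^ r - 1) div 3" using part3[OF assms] .
  fix B assume B: "seq_over r B \<and> zero_sum B \<and> Max (Lset B) \<le> kD r \<and> size B = Dk r (kD r)"
  have ne: "Lset B \<noteq> {}"
  proof -
    obtain F where "\<forall>X\<in>#F. min_zero_sum X" "\<Sum>\<^sub># F = B" using factor_ex B by blast
    then have "size F \<in> Lset B" unfolding Lset_def by blast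
    then show ?thesis by blast
  qed
  have "\<forall>t\<in>Lset B. t \<le> kD r"
  proof
    fix t assume "t \<in> Lset B"
    then have "t \<le> Max (Lset B)" using Lset_finite by (intro Max_ge) auto
    then show "t \<le> kD r" using B by linarith
  qed
  then have "squarefree_seq B \<and> {} \<notin># B" using part2[OF assms] B by blast
  then show "squarefree_seq B" "{} \<notin># B" by auto
qed

end
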